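(* Let $y\ge 1$ and $m\ge 2$ be integers. Consider the random walk $(X_t)_{t\ge 0}$ on $\mathbb{Z}$ with $X_0=m-1$ whose steps are independent and equal to $+y$ or $-1$, each with probability $\tfrac12$, stopped at the first time $\tau$ at which $X_\tau\in\{0\}\cup\{m,m+1,\dots,m+y-1\}$. For $k\ge 0$ let $\ell_k$ be the probability that $\tau<\infty$, $X_\tau=0$, and exactly $k$ of the first $\tau$ steps are $+y$ steps, and set $$p_l(z)=\sum_{k\ge 0}\ell_k\, z^{yk}.$$ For an integer $k$ define $$u[y,k](z)=\sum_{\substack{n\ge 0\\ (y+1)n-k<0}}\frac{z^{yn}}{2^{(y+1)n+1-k}}\binom{(y+1)n-k}{n}.$$ Then, as formal power series in $z$ (equivalently, as analytic functions for $|z|$ small), $$p_l(z)=\frac{1}{u[y,m](z)}.$$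
   Context: For an integer $a$ (possibly negative) and $n\ge 0$, $\binom{a}{n}=a(a-1)\cdots(a-n+1)/n!$. The sum defining $u[y,k]$ is finite, and is $0$ when it is empty. Before absorption the walk stays in $\{1,\dots,m-1\}$, so a $+y$ step from there lands in $\{2,\dots,m+y-1\}$ and the walk cannot jump over the right absorbing set $\{m,\dots,m+y-1\}$. Equivalently, $p_l(z)=z^{-(m-1)}\sum_j P(X_\tau=0,\ \text{exactly } j \text{ steps are } -1)\,z^j$, i.e. $z$ marks backward steps, normalized by the minimal number $m-1$ of backward steps. (This is the probability of being absorbed at the left barrier $0$, for a walk started next to the right barrier.) *)

theory Defs
  imports "HOL-Analysis.Analysis" "HOL-Computational_Algebra.Formal_Power_Series"
begin

(* A path is a list of steps: True = step +y, False = step -1. *)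
definition walk_pos :: "nat \<Rightarrow> nat \<Rightarrow> bool list \<Rightarrow> int" where
  "walk_pos y m xs = int m - 1 + int y * int (length (filter id xs))
                     - int (length (filter Not xs))"

definition absorbing :: "nat \<Rightarrow> nat \<Rightarrow> int set" where
  "absorbing y m = {0} \<union> {int m .. int m + int y - 1}"

(* finite step sequences realizing the event: tau = length xs, X_tau = 0,
   and no earlier absorption; with exactly k up-steps *)
definition left_paths :: "nat \<Rightarrow> nat \<Rightarrow> nat \<Rightarrow> bool list set" where
  "left_paths y m k = {xs. (\<forall>j < length xs. walk_pos y m (take j xs) \<notin> absorbing y m)
       \<and> walk_pos y m xs = 0 \<and> length (filter id xs) = k}"

(* probability of the event: sum of (1/2)^length over realizing paths *)
definition ell :: "nat \<Rightarrow> nat \<Rightarrow> nat \<Rightarrow> real" where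
  "ell y m k = infsum (\<lambda>xs. (1/2::real) ^ length xs) (left_paths y m k)"

definition p_l :: "nat \<Rightarrow> nat \<Rightarrow> real fps" where
  "p_l y m = Abs_fps (\<lambda>i. if y dvd i then ell y m (i div y) else 0)"

definition u_fps :: "nat \<Rightarrow> int \<Rightarrow> real fps" where
  "u_fps y k = Abs_fps (\<lambda>i. if y dvd i \<and> (int y + 1) * int (i div y) - k < 0
      then (of_int ((int y + 1) * int (i div y) - k) gchoose (i div y))
           / (2::real) powi ((int y + 1) * int (i div y) + 1 - k)
      else 0)"

end

theory Submission
  imports Defs
begin

unbundle no vec_syntax
unbundle fps_syntax

lemma gch_m1: "((-1::real) gchoose n) = (-1)^n"
  using gbinomial_minus[of "1::real" n] binomial_gbinomial[of n n] by simp

lemma gch_key: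
  fixes A :: int and n :: nat
  shows "(if A < 0 then (of_int A gchoose Suc n :: real) else 0)
       = (if A + 1 < 0 then of_int (A+1) gchoose Suc n else 0) - (if A < 0 then of_int A gchoose n else 0)"
proof (cases "A < -1")
  case True
  then show ?thesis using gbinomial_Suc_Suc[of "of_int A :: real" n] by simp
next
  case False
  show ?thesis
  proof (cases "A = -1")
    case True
    then show ?thesis using gch_m1[of n] gch_m1[of "Suc n"] by simp
  qed (use False in auto)
qed

lemma fps_two_mult_nth: "((2::real fps) * f) $ i = 2 * f $ i"
  by (simp add: numeral_fps_const)

lemma u_rec:
  fixes y :: nat and j :: int
  assumes "y \<ge> 1" "j \<ge> 1"
  shows "u_fps y (j+1) = 2 * u_fps y j - fps_X ^ y * u_fps y (j - int y)"
proof (rule fps_ext)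
  fix i
  show "u_fps y (j+1) $ i = (2 * u_fps y j - fps_X ^ y * u_fps y (j - int y)) $ i"
  proof (cases "y dvd i")
    case False
    have "\<not> y dvd (i - y)" if "i \<ge> y" using False that
      by (metis dvd_diff_nat dvd_refl le_add_diff_inverse2 dvd_add)
    then show ?thesis using False by (simp add: u_fps_def fps_X_power_mult_nth)
  next
    case True
    then obtain n where i: "i = y * n" by auto
    show ?thesis
    proof (cases n)
      case 0
      then show ?thesis using assms i
        by (simp add: u_fps_def fps_X_power_mult_nth power_int_diff power_int_minus) (metis inverse_eq_divide inverse_inverse_eq)
    next
      case (Suc n')
      define A where "A = (int y + 1) * int n - j - 1"
      have iy: "\<not> i < y" using Suc i by simp
      have d1: "i div y = n" using i assms by simp
      have iy2: "i - y = y * n'" using i Suc by simp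
      have d2: "(i - y) div y = n'" using iy2 assms by simp
      have dv: "y dvd (i - y)" using iy2 by simp
      have e1: "(int y + 1) * int (i div y) - (j + 1) = A" using d1 A_def by simp
      have e2: "(int y + 1) * int (i div y) - j = A + 1" using d1 A_def by simp
      have e3: "(int y + 1) * int ((i - y) div y) - (j - int y) = A" using d2 A_def Suc by (simp add: algebra_simps)
      have f1: "(int y + 1) * int (i div y) + 1 - (j + 1) = A + 1" using d1 A_def by simp
      have f2: "(int y + 1) * int (i div y) + 1 - j = A + 1 + 1" using d1 A_def by simp
      have f3: "(int y + 1) * int ((i - y) div y) + 1 - (j - int y) = A + 1" using d2 A_def Suc by (simp add: algebra_simps)
      have p: "(2::real) powi (A + 1 + 1) = 2 * 2 powi (A + 1)"
        by (simp add: power_int_add)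
      have "u_fps y (j+1) $ i = (if A < 0 then (of_int A gchoose Suc n' :: real) else 0) / 2 powi (A+1)"
        unfolding u_fps_def fps_nth_Abs_fps e1 f1 using True d1 Suc by simp
      moreover have "(2 * u_fps y j) $ i = (if A + 1 < 0 then (of_int (A+1) gchoose Suc n' :: real) else 0) / 2 powi (A+1)"
        unfolding fps_two_mult_nth u_fps_def fps_nth_Abs_fps e2 f2 p using True d1 Suc by simp
      moreover have "(fps_X ^ y * u_fps y (j - int y)) $ i = (if A < 0 then (of_int A gchoose n' :: real) else 0) / 2 powi (A+1)"
        unfolding fps_X_power_mult_nth u_fps_def fps_nth_Abs_fps e3 f3 using iy dv d2 by simp
      ultimately show ?thesis using gch_key[of A n'] by (simp add: diff_divide_distrib)
    qed
  qed
qed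

definition wp :: "nat \<Rightarrow> int \<Rightarrow> bool list \<Rightarrow> int" where
  "wp y x xs = x + int y * int (length (filter id xs)) - int (length (filter Not xs))"

definition LP :: "nat \<Rightarrow> nat \<Rightarrow> int \<Rightarrow> nat \<Rightarrow> bool list set" where
  "LP y m x k = {xs. (\<forall>j < length xs. wp y x (take j xs) \<notin> absorbing y m)
       \<and> wp y x xs = 0 \<and> length (filter id xs) = k}"

definition W :: "bool list set \<Rightarrow> real" where
  "W S = (\<Sum>xs\<in>S. (1/2::real) ^ length xs)"

definition FF :: "nat \<Rightarrow> nat \<Rightarrow> int \<Rightarrow> real fps" where
  "FF y m x = Abs_fps (\<lambda>i. if y dvd i then W (LP y m x (i div y)) else 0)"

lemma wp_Nil[simp]: "wp y x [] = x"
  by (simp add: wp_def)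

lemma wp_Cons: "wp y x (b # ys) = wp y (if b then x + int y else x - 1) ys"
  by (simp add: wp_def algebra_simps)

lemma all_take_Cons:
  "(\<forall>j < length (b # ys). P (take j (b # ys))) \<longleftrightarrow> P [] \<and> (\<forall>j < length ys. P (b # take j ys))"
  by (auto simp: less_Suc_eq_0_disj)

lemma LP_finite: "finite (LP y m x k)"
proof -
  have "LP y m x k \<subseteq> {xs. set xs \<subseteq> UNIV \<and> length xs = nat (x + int y * int k) + k}"
  proof
    fix xs assume "xs \<in> LP y m x k"
    then have h: "wp y x xs = 0" "length (filter id xs) = k" by (auto simp: LP_def)
    have "length (filter id xs) + length (filter (\<lambda>b. \<not> id b) xs) = length xs"
      by (rule sum_length_filter_compl)
    moreover have "filter (\<lambda>b. \<not> id b) xs = filter Not xs" by simp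
    ultimately show "xs \<in> {xs. set xs \<subseteq> UNIV \<and> length xs = nat (x + int y * int k) + k}"
      using h by (auto simp: wp_def)
  qed
  moreover have "finite {xs. set xs \<subseteq> (UNIV::bool set) \<and> length xs = nat (x + int y * int k) + k}"
    by (rule finite_lists_length_eq) simp
  ultimately show ?thesis by (rule finite_subset)
qed

lemma LP_zero: "LP y m 0 k = (if k = 0 then {[]} else {})"
proof -
  have "0 \<in> absorbing y m" by (simp add: absorbing_def)
  then have "xs \<in> LP y m 0 k \<longleftrightarrow> xs = [] \<and> k = 0" for xs
    by (cases xs) (auto simp: LP_def)
  then show ?thesis by auto
qed

lemma LP_abs:
  assumes "1 \<le> m" "int m \<le> x" "x \<le> int m + int y - 1"
  shows "LP y m x k = {}"
proof -
  have "x \<in> absorbing y m" using assms by (simp add: absorbing_def)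
  moreover have "x \<noteq> 0" using assms by simp
  ultimately have "xs \<notin> LP y m x k" for xs
    by (cases xs) (auto simp: LP_def)
  then show ?thesis by auto
qed

lemma LP_Cons_iff:
  assumes "x \<notin> absorbing y m"
  shows "(b # ys \<in> LP y m x k) \<longleftrightarrow>
    (ys \<in> LP y m (if b then x + int y else x - 1) (if b then k - 1 else k) \<and> (b \<longrightarrow> k \<noteq> 0))"
proof -
  have "(b # ys \<in> LP y m x k) \<longleftrightarrow> (\<forall>j < length (b # ys). wp y x (take j (b # ys)) \<notin> absorbing y m)
       \<and> wp y x (b # ys) = 0 \<and> length (filter id (b # ys)) = k"
    by (simp add: LP_def)
  also have "\<dots> \<longleftrightarrow> (\<forall>j < length ys. wp y x (b # take j ys) \<notin> absorbing y m)
       \<and> wp y x (b # ys) = 0 \<and> length (filter id (b # ys)) = k"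
    using assms by (subst all_take_Cons) simp
  finally show ?thesis by (cases b) (auto simp: LP_def wp_Cons)
qed

lemma LP_step:
  assumes "1 \<le> x" "x \<le> int m - 1"
  shows "LP y m x k = Cons False ` LP y m (x - 1) k \<union>
     (if k = 0 then {} else Cons True ` LP y m (x + int y) (k - 1))"
proof -
  have xa: "x \<notin> absorbing y m" using assms by (simp add: absorbing_def)
  have x0: "x \<noteq> 0" using assms by simp
  show ?thesis
  proof (intro equalityI subsetI)
    fix xs assume xs: "xs \<in> LP y m x k"
    then obtain b ys where bys: "xs = b # ys" using x0 by (cases xs) (auto simp: LP_def)
    show "xs \<in> Cons False ` LP y m (x - 1) k \<union>
     (if k = 0 then {} else Cons True ` LP y m (x + int y) (k - 1))"
    proof (cases b)
      case True
      then have "ys \<in> LP y m (x + int y) (k - 1)" "k \<noteq> 0"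
        using xs bys unfolding LP_def all_take_Cons by (auto simp: wp_Cons)
      then show ?thesis using bys True by auto
    next
      case False
      then have "ys \<in> LP y m (x - 1) k"
        using xs bys unfolding LP_def all_take_Cons by (auto simp: wp_Cons)
      then show ?thesis using bys False by auto
    qed
  next
    fix xs assume "xs \<in> Cons False ` LP y m (x - 1) k \<union>
     (if k = 0 then {} else Cons True ` LP y m (x + int y) (k - 1))"
    then show "xs \<in> LP y m x k"
    proof (elim UnE)
      assume "xs \<in> Cons False ` LP y m (x - 1) k"
      then obtain ys where e: "xs = False # ys" and ys: "ys \<in> LP y m (x - 1) k" by auto
      have "False # ys \<in> LP y m x k"
        using xa ys LP_Cons_iff by simp
      then show ?thesis using e by simp
    next
      assume "xs \<in> (if k = 0 then {} else Cons True ` LP y m (x + int y) (k - 1))"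
      then obtain ys where e: "xs = True # ys" and ys: "ys \<in> LP y m (x + int y) (k - 1)" and k: "k \<noteq> 0"
        by (auto split: if_splits)
      have "True # ys \<in> LP y m x k"
        using xa ys k LP_Cons_iff by simp
      then show ?thesis using e by simp
    qed
  qed
qed

lemma W_step:
  assumes "1 \<le> x" "x \<le> int m - 1"
  shows "W (LP y m x k) = W (LP y m (x - 1) k) / 2 +
     (if k = 0 then 0 else W (LP y m (x + int y) (k - 1)) / 2)"
proof -
  have d: "Cons False ` LP y m (x - 1) k \<inter>
     (if k = 0 then {} else Cons True ` LP y m (x + int y) (k - 1)) = {}" by auto
  have r: "W (Cons b ` S) = W S / 2" for b S
    by (simp add: W_def sum.reindex sum_divide_distrib)
  have u: "W (A \<union> B) = W A + W B" if "finite A" "finite B" "A \<inter> B = {}" for A B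
    unfolding W_def using that by (rule sum.union_disjoint)
  show ?thesis
  proof (cases "k = 0")
    case True
    then show ?thesis unfolding LP_step[OF assms] using r by simp
  next
    case False
    have "W (LP y m x k) = W (Cons False ` LP y m (x - 1) k) + W (Cons True ` LP y m (x + int y) (k - 1))"
    proof -
      have "LP y m x k = Cons False ` LP y m (x - 1) k \<union> Cons True ` LP y m (x + int y) (k - 1)"
        using LP_step[OF assms, where k=k] False by simp
      then show ?thesis using False d by (simp only:) (intro u, auto simp: LP_finite)
    qed
    then show ?thesis using False by (simp only: r) simp
  qed
qed

lemma dvd_minus_y: "y \<le> i \<Longrightarrow> (y::nat) dvd (i - y) \<longleftrightarrow> y dvd i"
  by (metis dvd_add_left_iff dvd_refl le_add_diff_inverse2)

lemma FF_rec:
  assumes "y \<ge> 1" "1 \<le> x" "x \<le> int m - 1"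
  shows "FF y m x = fps_const (1/2) * FF y m (x - 1) + fps_const (1/2) * (fps_X ^ y * FF y m (x + int y))"
proof (rule fps_ext)
  fix i
  show "FF y m x $ i = (fps_const (1/2) * FF y m (x - 1) + fps_const (1/2) * (fps_X ^ y * FF y m (x + int y))) $ i"
  proof (cases "y dvd i")
    case False
    then show ?thesis by (simp add: FF_def fps_X_power_mult_nth dvd_minus_y)
  next
    case True
    then obtain n where i: "i = y * n" by auto
    show ?thesis
    proof (cases n)
      case 0
      then have "i < y" "i div y = 0" using i assms by auto
      then show ?thesis using True W_step[OF assms(2,3), of y 0]
        by (simp add: FF_def fps_X_power_mult_nth)
    next
      case (Suc n')
      have iy2: "i - y = y * n'" using i Suc by simp
      have d1: "i div y = Suc n'" using i Suc assms by simp
      have d2: "(i - y) div y = n'" using iy2 assms by simp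
      have "\<not> i < y" using i Suc by simp
      then show ?thesis using True W_step[OF assms(2,3), of y "Suc n'"] d1 d2 iy2
        by (simp add: FF_def fps_X_power_mult_nth)
    qed
  qed
qed

lemma FF_zero: assumes "y \<ge> 1" shows "FF y m 0 = 1"
proof (rule fps_ext)
  fix i
  have "y dvd i \<and> i div y = 0 \<longleftrightarrow> i = 0" using assms
    by (metis dvd_0_right div_0 dvd_div_mult_self mult_0)
  then show "FF y m 0 $ i = 1 $ i"
    by (auto simp: FF_def LP_zero W_def)
qed

lemma FF_abs: assumes "1 \<le> m" "int m \<le> x" "x \<le> int m + int y - 1" shows "FF y m x = 0"
  by (rule fps_ext) (simp add: FF_def LP_abs[OF assms] W_def)

lemma u_nonpos: assumes "k \<le> 0" shows "u_fps y k = 0"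
proof -
  have "\<not> ((int y + 1) * int n - k < 0)" for n
    using assms by (smt (verit) mult_nonneg_nonneg of_nat_0_le_iff)
  then show ?thesis by (intro fps_ext) (simp add: u_fps_def)
qed

lemma u_one: assumes "y \<ge> 1" shows "u_fps y 1 = 1"
proof (rule fps_ext)
  fix i
  have "y dvd i \<and> (int y + 1) * int (i div y) - 1 < 0 \<longleftrightarrow> i = 0" using assms
    by (smt (verit, ccfv_threshold) div_0 dvd_0_right dvd_div_mult_self mult_eq_0_iff of_nat_0_eq_iff
        of_nat_le_0_iff zero_less_mult_iff of_nat_0_less_iff)
  then show "u_fps y 1 $ i = 1 $ i"
    by (auto simp: u_fps_def)
qed

lemma half_two: "fps_const (1/2::real) * 2 = 1"
  by (simp add: numeral_fps_const fps_const_mult[symmetric] del: fps_const_mult)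

lemma u_rec':
  assumes "y \<ge> 1" "j \<ge> 1"
  shows "u_fps y j = fps_const (1/2) * u_fps y (j + 1) + fps_const (1/2) * (fps_X ^ y * u_fps y (j - int y))"
proof -
  have "fps_const (1/2) * u_fps y (j + 1) + fps_const (1/2) * (fps_X ^ y * u_fps y (j - int y))
     = fps_const (1/2) * (2 * u_fps y j)"
    unfolding u_rec[OF assms] by (simp add: algebra_simps)
  also have "\<dots> = u_fps y j" by (simp add: mult.assoc[symmetric] half_two)
  finally show ?thesis by simp
qed

lemma main_product:
  fixes y m :: nat
  assumes y1: "y \<ge> 1" and m2: "m \<ge> 2"
  shows "FF y m (int m - 1) * u_fps y (int m) = 1"
proof -
  define U where "U = u_fps y (int m)"
  define D where "D x = FF y m x * U - u_fps y (int m - x)" for x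
  define c where "c = fps_const (1/2::real)"
  have Drec: "D x = c * D (x - 1) + c * (fps_X ^ y * D (x + int y))"
    if "1 \<le> x" "x \<le> int m - 1" for x
  proof -
    have e1: "int m - (x - 1) = (int m - x) + 1" by simp
    have e2: "int m - (x + int y) = (int m - x) - int y" by simp
    have "u_fps y (int m - x) = c * u_fps y (int m - (x - 1)) + c * (fps_X ^ y * u_fps y (int m - (x + int y)))"
      unfolding e1 e2 c_def using u_rec'[OF y1, of "int m - x"] that by simp
    then show ?thesis unfolding D_def FF_rec[OF y1 that] c_def[symmetric]
      by (simp add: algebra_simps)
  qed
  have Dnth: "D x $ i = 1/2 * D (x - 1) $ i + (if i < y then 0 else 1/2 * D (x + int y) $ (i - y))"
    if "1 \<le> x" "x \<le> int m - 1" for x i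
    using Drec[OF that] by (simp add: c_def fps_X_power_mult_nth)
  have D0: "D 0 = 0" by (simp add: D_def FF_zero[OF y1] U_def)
  have Dabs: "D x = 0" if "int m \<le> x" "x \<le> int m + int y - 1" for x
    using that m2 by (simp add: D_def FF_abs u_nonpos)
  have van: "\<forall>x. 0 \<le> x \<and> x \<le> int m + int y - 1 \<longrightarrow> D x $ i = 0" for i
  proof (induction i rule: less_induct)
    case (less i)
    have low: "D (int n) $ i = 0" if "int n \<le> int m - 1" for n
      using that
    proof (induction n)
      case 0
      then show ?case using D0 by simp
    next
      case (Suc n)
      have "D (int (Suc n)) $ i = 1/2 * D (int n) $ i + (if i < y then 0 else 1/2 * D (int (Suc n) + int y) $ (i - y))"
        using Dnth[of "int (Suc n)" i] Suc.prems by simp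
      moreover have "D (int n) $ i = 0" using Suc by simp
      moreover have "D (int (Suc n) + int y) $ (i - y) = 0" if "\<not> i < y"
        using less.IH[of "i - y"] that y1 Suc.prems by simp
      ultimately show ?case by simp
    qed
    show ?case
    proof (intro allI impI)
      fix x assume x: "0 \<le> x \<and> x \<le> int m + int y - 1"
      show "D x $ i = 0"
      proof (cases "x \<le> int m - 1")
        case True
        then show ?thesis using low[of "nat x"] x by simp
      next
        case False
        then show ?thesis using Dabs[of x] x by simp
      qed
    qed
  qed
  have "D (int m - 1) = 0"
    by (rule fps_ext) (use van m2 in simp)
  then show ?thesis using u_one[OF y1] by (simp add: D_def U_def)
qed

lemma left_paths_LP: "left_paths y m k = LP y m (int m - 1) k"
  unfolding left_paths_def LP_def walk_pos_def wp_def by simp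

lemma p_l_FF: "p_l y m = FF y m (int m - 1)"
  unfolding p_l_def FF_def ell_def left_paths_LP W_def
  by (intro arg_cong[where f=Abs_fps] ext) (simp add: infsum_finite[OF LP_finite])

theorem mainTheorem1:
  fixes y m :: nat
  assumes "y \<ge> 1" and "m \<ge> 2"
  shows "p_l y m = inverse (u_fps y (int m))"
proof -
  have "u_fps y (int m) * p_l y m = 1"
    using main_product[OF assms] by (simp add: p_l_FF mult.commute)
  then show ?thesis by (rule fps_inverse_unique[symmetric])
qed

end
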